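(* Let $(a,b,c)$ be a primitive Pythagorean triple (positive integers with $a^2+b^2=c^2$, $\gcd(a,b,c)=1$) with $b$ even, and let $r$ be an integer such that: (1) $r>1$ and $r$ is not prime; (2) every prime $p\mid r$ satisfies $p\equiv 1 \pmod 4$; (3) $\gcd(r,a)=\gcd(r,b)=1$. Then the equation \[a^{2}x^{2}+b^{2}y^{2}-c^{2}r^{2}z^{2}=0\] (in variables $x,y,z$) has solutions in $\mathbb R^{+}$ and in $\mathbb Z_{p}^{\times}$ for all primes $p$. Let $\mathcal{P}=\{\text{prime numbers}\}\cup \{1\}$. Then there exists an effective constant $C(a,b,c)$ such that if $x,y\in \mathcal{P}$ and $z\in \mathbb Z$ is a solution of this equation, then $z\le C(a,b,c)/r$. Hence if $r>C(a,b,c)$ the equation has no such solutions, hence no solutions in primes, and so does not satisfy the prime Hasse principle.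
   Context: A solution "in $\mathbb R^+$" (resp. "in $\mathbb Z_p^\times$") means one with all variables in $\{x\in\mathbb R:x>0\}$ (resp. in $\{x\in\mathbb Q_p:|x|_p=1\}$). The prime Hasse principle for a system of homogeneous integer polynomial equations: if it has a solution with all variables in $\mathbb R^+$ and, for each prime $p$, one with all variables in $\mathbb Z_p^\times$, then it has a solution in integers with all variables prime. *)

theory Defs
  imports "HOL-Number_Theory.Number_Theory"
begin

text \<open>A p-adic integer is represented, as in the inverse-limit definition
  Z_p = lim Z/p^k, by a compatible sequence of integer representatives:
  X k is a representative modulo p^k and X (k+1) = X k (mod p^k).
  It is a unit iff p does not divide X 1.  For a polynomial F with integer
  coefficients, F vanishes at the limit point iff F (X k, Y k, Z k) = 0 mod p^k
  for all k.\<close>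

definition padic_int_seq :: "int \<Rightarrow> (nat \<Rightarrow> int) \<Rightarrow> bool" where
  "padic_int_seq p X \<longleftrightarrow> (\<forall>k. [X (Suc k) = X k] (mod p ^ k))"

definition padic_unit_seq :: "int \<Rightarrow> (nat \<Rightarrow> int) \<Rightarrow> bool" where
  "padic_unit_seq p X \<longleftrightarrow> padic_int_seq p X \<and> \<not> p dvd X 1"

definition Zp_unit_solvable :: "int \<Rightarrow> (int \<Rightarrow> int \<Rightarrow> int \<Rightarrow> int) \<Rightarrow> bool" where
  "Zp_unit_solvable p F \<longleftrightarrow>
     (\<exists>X Y Z. padic_unit_seq p X \<and> padic_unit_seq p Y \<and> padic_unit_seq p Z \<and>
        (\<forall>k. p ^ k dvd F (X k) (Y k) (Z k)))"

definition primes_or_one :: "int set" where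
  "primes_or_one = {x. prime x \<or> x = 1}"

end

theory Submission
  imports Defs
begin

lemma half_bound:
  fixes a b x y W :: int
  assumes a: "a > 0" and b: "b > 0" and W: "W > 0" and x: "x > 0" and y: "y > 0"
    and px: "prime x \<or> x = 1" and py: "prime y \<or> y = 1" and xy: "x \<noteq> y"
    and eq: "(W - b*y) * (W + b*y) = a^2 * x^2"
  shows "W + b*y \<le> 4*a^2*b^2 \<or> W - b*y \<le> a^2"
proof -
  define P where "P = W - b*y"
  define S where "S = W + b*y"
  have S0: "S > 0" using W b y unfolding S_def by (simp add: add_pos_pos)
  have PS: "P * S = a^2 * x^2" using eq unfolding P_def S_def by simp
  have pos: "a^2 * x^2 > 0" using a x by simp
  hence P0: "P > 0" using PS S0 by (metis zero_less_mult_pos2)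
  have PleS: "P \<le> S" unfolding P_def S_def using b y by simp
  have b1: "a^2 \<le> 4*a^2*b^2"
  proof -
    have "1 \<le> b^2" using b by (simp add: one_le_power)
    hence "1 \<le> 4*b^2" by simp
    hence "a^2 * 1 \<le> a^2 * (4*b^2)" by (intro mult_left_mono) auto
    thus ?thesis by simp
  qed
  show ?thesis
  proof (cases "x = 1")
    case True
    hence "P * S = a^2" using PS by simp
    moreover have "S \<le> P * S" using P0 S0 by (simp add: mult_le_cancel_right1)
    ultimately have "S \<le> a^2" by simp
    thus ?thesis using b1 unfolding S_def by simp
  next
    case False
    hence xp: "prime x" using px by simp
    have xdvd: "x dvd P * S" using PS by simp
    show ?thesis
    proof (cases "x dvd P \<and> x dvd S")
      case True
      hence "x dvd S - P" by auto
      moreover have "S - P = 2*b*y" unfolding S_def P_def by simp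
      ultimately have "x dvd (2*b) * y" by simp
      hence "x dvd 2*b \<or> x dvd y" using xp prime_dvd_mult_iff by blast
      moreover have "\<not> x dvd y"
      proof
        assume "x dvd y"
        show False
        proof (cases "y = 1")
          case True thus False using \<open>x dvd y\<close> xp x by (simp add: prime_int_iff)
        next
          case False
          hence "prime y" using py by simp
          thus False using primes_dvd_imp_eq[OF xp _ \<open>x dvd y\<close>] xy by simp
        qed
      qed
      ultimately have "x dvd 2*b" by simp
      hence "x \<le> 2*b" using b by (simp add: zdvd_imp_le)
      hence "x^2 \<le> (2*b)^2" using x by (intro power_mono) auto
      hence "a^2 * x^2 \<le> a^2 * (2*b)^2" by (intro mult_left_mono) auto
      moreover have "S \<le> P * S" using P0 S0 by (simp add: mult_le_cancel_right1)
      ultimately have "S \<le> 4*a^2*b^2" using PS by (simp add: power_mult_distrib)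
      thus ?thesis unfolding S_def by simp
    next
      case False
      have x2: "x^2 dvd P * S" using PS by simp
      show ?thesis
      proof (cases "x dvd S")
        case True
        hence nP: "\<not> x dvd P" using False by simp
        hence "coprime x P" using xp by (simp add: prime_imp_coprime)
        hence "coprime (x^2) P" by simp
        hence "x^2 dvd S" using x2 by (simp add: coprime_dvd_mult_right_iff)
        then obtain k where k: "S = x^2 * k" by blast
        have "x^2 * (P * k) = x^2 * a^2" using PS k by (simp add: algebra_simps)
        hence "P * k = a^2" using x by simp
        moreover have "k > 0" using S0 k x by (simp add: zero_less_mult_iff)
        moreover have "P \<le> P * k" using P0 \<open>k > 0\<close> by (simp add: mult_le_cancel_left1)
        ultimately have "P \<le> a^2" by simp
        thus ?thesis unfolding P_def by simp
      next
        case False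
        hence "coprime x S" using xp by (simp add: prime_imp_coprime)
        hence "coprime (x^2) S" by simp
        hence "x^2 dvd P" using x2 by (simp add: coprime_dvd_mult_left_iff)
        then obtain k where k: "P = x^2 * k" by blast
        have "x^2 * (S * k) = x^2 * a^2" using PS k by (simp add: algebra_simps)
        hence "S * k = a^2" using x by simp
        moreover have "k > 0" using P0 k x by (simp add: zero_less_mult_iff)
        moreover have "S \<le> S * k" using S0 \<open>k > 0\<close> by (simp add: mult_le_cancel_left1)
        ultimately have "S \<le> a^2" by simp
        thus ?thesis using PleS unfolding P_def S_def by simp
      qed
    qed
  qed
qed


lemma bound_w:
  fixes a b c x y w :: int
  assumes a: "a > 0" and b: "b > 0" and c: "c > 0" and abc: "a^2 + b^2 = c^2"
    and x: "x > 0" and y: "y > 0"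
    and px: "prime x \<or> x = 1" and py: "prime y \<or> y = 1" and xy: "x \<noteq> y"
    and eq: "a^2 * x^2 + b^2 * y^2 = c^2 * w^2"
  shows "c * \<bar>w\<bar> \<le> 4*a^2*b^2 + 2*c^2"
proof -
  define W where "W = c * \<bar>w\<bar>"
  have W2: "W^2 = c^2 * w^2" unfolding W_def by (simp add: power_mult_distrib)
  have "a^2 * x^2 > 0" using a x by simp
  moreover have "b^2 * y^2 \<ge> 0" by simp
  ultimately have "w \<noteq> 0"
  proof (intro notI)
    assume "w = 0"
    hence "a^2 * x^2 + b^2 * y^2 = 0" using eq by simp
    thus False using \<open>a^2 * x^2 > 0\<close> \<open>b^2 * y^2 \<ge> 0\<close> by linarith
  qed
  hence W0: "W > 0" unfolding W_def using c by simp
  have e1: "(W - b*y) * (W + b*y) = a^2 * x^2"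
    using W2 eq by (simp add: algebra_simps power2_eq_square)
  have e2: "(W - a*x) * (W + a*x) = b^2 * y^2"
    using W2 eq by (simp add: algebra_simps power2_eq_square)
  have h1: "W + b*y \<le> 4*a^2*b^2 \<or> W - b*y \<le> a^2"
    using half_bound[OF a b W0 x y px py xy e1] .
  have h2: "W + a*x \<le> 4*b^2*a^2 \<or> W - a*x \<le> b^2"
    using half_bound[OF b a W0 y x py px _ e2] xy by auto
  have "W \<le> 4*a^2*b^2 + 2*c^2"
  proof (cases "W + b*y \<le> 4*a^2*b^2 \<or> W + a*x \<le> 4*b^2*a^2")
    case True
    have "b*y \<ge> 0" "a*x \<ge> 0" "c^2 \<ge> 0" using a b x y by auto
    moreover have "4*b^2*a^2 = 4*a^2*b^2" by simp
    ultimately show ?thesis using True by linarith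
  next
    case False
    define u where "u = W - b*y"
    define v where "v = W - a*x"
    have u: "u \<le> a^2" and v: "v \<le> b^2" using False h1 h2 unfolding u_def v_def by auto
    have "W^2 = (W - v)^2 + (W - u)^2" unfolding u_def v_def using W2 eq by (simp add: power_mult_distrib)
    hence "W * (2*(u+v) - W) = u^2 + v^2" by (simp add: algebra_simps power2_eq_square)
    moreover have "u^2 + v^2 \<ge> 0" by simp
    ultimately have "W * (2*(u+v) - W) \<ge> 0" by simp
    hence "2*(u+v) - W \<ge> 0" using W0 by (simp add: zero_le_mult_iff)
    hence "W \<le> 2*c^2" using u v abc by simp
    moreover have "0 \<le> 4*a^2*b^2" by simp
    ultimately show ?thesis by linarith
  qed
  thus ?thesis unfolding W_def .
qed

lemma bound_rz:
  fixes a b c x y z r :: int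
  assumes a: "a > 0" and b: "b > 0" and c: "c > 0" and abc: "a^2 + b^2 = c^2"
    and r: "r > 1" "\<not> prime r"
    and px: "x \<in> primes_or_one" and py: "y \<in> primes_or_one"
    and eq: "a^2 * x^2 + b^2 * y^2 - c^2 * r^2 * z^2 = 0"
  shows "r * \<bar>z\<bar> \<le> 4*a^2*b^2 + 2*c^2"
proof -
  have px': "prime x \<or> x = 1" and py': "prime y \<or> y = 1" using px py
    unfolding primes_or_one_def by auto
  have x: "x > 0" using px' by (auto simp: prime_int_iff)
  have y: "y > 0" using py' by (auto simp: prime_int_iff)
  define w where "w = r * z"
  have eq': "a^2 * x^2 + b^2 * y^2 = c^2 * w^2" using eq unfolding w_def
    by (simp add: power_mult_distrib algebra_simps)
  have xy: "x \<noteq> y"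
  proof
    assume "x = y"
    hence "(a^2 + b^2) * x^2 = c^2 * w^2" using eq' by (simp add: algebra_simps)
    hence "c^2 * x^2 = c^2 * w^2" using abc by simp
    hence "x^2 = w^2" using c by simp
    hence "x = w \<or> x = - w" by (simp add: power2_eq_iff)
    hence "x = \<bar>w\<bar>" using x by auto
    moreover have "r dvd \<bar>w\<bar>" unfolding w_def by simp
    ultimately have "r dvd x" by simp
    thus False
    proof (cases "x = 1")
      case True
      hence "r \<le> 1" using \<open>r dvd x\<close> zdvd_imp_le[of r 1] by simp
      thus False using r by simp
    next
      case False
      hence "prime x" using px' by simp
      hence "\<forall>m::int. m \<ge> 0 \<longrightarrow> m dvd x \<longrightarrow> m = 1 \<or> m = x"
        unfolding prime_int_altdef by blast
      hence "0 \<le> r \<longrightarrow> r dvd x \<longrightarrow> r = 1 \<or> r = x" by (rule spec)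
      hence "r = 1 \<or> r = x" using \<open>r dvd x\<close> r(1) by simp
      thus False using r \<open>prime x\<close> by auto
    qed
  qed
  have "c * \<bar>w\<bar> \<le> 4*a^2*b^2 + 2*c^2"
    using bound_w[OF a b c abc x y px' py' xy eq'] .
  moreover have "\<bar>w\<bar> \<le> c * \<bar>w\<bar>" using c by (simp add: mult_le_cancel_right1)
  moreover have "\<bar>w\<bar> = r * \<bar>z\<bar>" unfolding w_def using r by (simp add: abs_mult)
  ultimately show ?thesis by simp
qed

lemma sqrt_minus_one:
  fixes p :: int
  assumes p: "prime p" and p4: "[p = 1] (mod 4)"
  shows "\<exists>j. [j^2 = -1] (mod p)"
proof -
  have p0: "p > 1" using p by (simp add: prime_gt_1_int)
  have pm: "p mod 4 = 1" using p4 p0 by (simp add: cong_def)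
  define m where "m = p div 4"
  have pm': "p = 4*m + 1" unfolding m_def using pm div_mult_mod_eq[of p 4] by linarith
  hence m0: "m \<ge> 1" using p0 by linarith
  define q where "q = nat p"
  have qp: "int q = p" unfolding q_def using p0 by simp
  have qm: "q = 4 * nat m + 1" using qp pm' m0 by linarith
  have q: "prime q" using p unfolding q_def using p0 by simp
  have q2: "2 < q" using qm m0 by linarith
  have "(q - 1) div 2 = 2 * nat m" using qm by simp
  hence "(-1::int) ^ ((q - 1) div 2) = 1" by simp
  hence L: "[Legendre (-1) p = 1] (mod p)" using euler_criterion[OF q q2, of "-1"] qp by simp
  show ?thesis
  proof (rule ccontr)
    assume "\<not> ?thesis"
    hence nq: "\<not> QuadRes p (-1)" unfolding QuadRes_def by simp
    show False
    proof (cases "[-1 = 0] (mod p)")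
      case True
      hence "p dvd 1" by (simp add: cong_iff_dvd_diff)
      thus False using p0 by (auto dest: zdvd_imp_le)
    next
      case False
      hence "Legendre (-1) p = -1" using nq unfolding Legendre_def by simp
      hence "[-1 = 1] (mod p)" using L by simp
      hence "p dvd 2" by (simp add: cong_iff_dvd_diff)
      thus False using pm' m0 by (auto dest: zdvd_imp_le)
    qed
  qed
qed

lemma lift_step:
  fixes p A u X :: int and k :: nat
  assumes p: "prime p" and p2: "\<not> p dvd 2" and pA: "\<not> p dvd A" and pX: "\<not> p dvd X"
    and k: "k \<ge> 1" and c: "[A * X^2 = u] (mod p^k)"
  shows "\<exists>X'. [X' = X] (mod p^k) \<and> [A * X'^2 = u] (mod p^(Suc k))"
proof -
  obtain j where kj: "k = Suc j" using k by (cases k) auto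
  obtain m where m: "A * X^2 - u = p^k * m" using c by (auto simp: cong_iff_dvd_diff dvd_def)
  have "\<not> p dvd 2 * A * X" using p p2 pA pX by (simp add: prime_dvd_mult_iff)
  hence "coprime p (2*A*X)" by (rule prime_imp_coprime[OF p])
  hence "coprime (2*A*X) p" by (simp add: coprime_commute)
  then obtain v where v: "[2*A*X * v = 1] (mod p)" using cong_solve_coprime_int by blast
  then obtain s where s: "2*A*X*v - 1 = p * s" by (auto simp: cong_iff_dvd_diff dvd_def)
  define t where "t = - m * v"
  define X' where "X' = X + t * p^k"
  have "A * X'^2 - u = p^(Suc k) * (- m * s + A * t^2 * p^j)"
  proof -
    have "A * X'^2 - u = (A * X^2 - u) + p^k * (2*A*X*t) + A*t^2 * (p^k*p^k)"
      unfolding X'_def by (simp add: algebra_simps power2_eq_square)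
    also have "... = p^k * m + p^k * (- m * (2*A*X*v)) + A*t^2*(p^k*p^k)"
      using m unfolding t_def by (simp add: algebra_simps)
    also have "2*A*X*v = 1 + p*s" using s by simp
    also have "p^k * m + p^k * (- m * (1 + p*s)) + A*t^2*(p^k*p^k) = p^(Suc k) * (- m * s + A * t^2 * p^j)"
      unfolding kj by (simp add: algebra_simps)
    finally show ?thesis .
  qed
  hence "[A * X'^2 = u] (mod p^(Suc k))" by (simp add: cong_iff_dvd_diff)
  moreover have "[X' = X] (mod p^k)" unfolding X'_def by (simp add: cong_iff_dvd_diff)
  ultimately show ?thesis by blast
qed

lemma hensel_seq:
  fixes p A u X0 :: int
  assumes p: "prime p" and p2: "\<not> p dvd 2" and pA: "\<not> p dvd A" and pX: "\<not> p dvd X0"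
    and c: "[A * X0^2 = u] (mod p)"
  shows "\<exists>S. padic_unit_seq p S \<and> (\<forall>k. p^k dvd A * (S k)^2 - u)"
proof -
  define L where "L = (\<lambda>(n::nat) X. SOME X'. [X' = X] (mod p^(Suc n)) \<and> [A * X'^2 = u] (mod p^(Suc (Suc n))))"
  define g where "g = rec_nat X0 L"
  have g0: "g 0 = X0" unfolding g_def by simp
  have gS: "g (Suc n) = L n (g n)" for n unfolding g_def by simp
  have G: "[A * (g n)^2 = u] (mod p^(Suc n)) \<and> \<not> p dvd g n \<and> [g (Suc n) = g n] (mod p^(Suc n))" for n
  proof (induction n)
    case 0
    have "\<exists>X'. [X' = X0] (mod p^1) \<and> [A * X'^2 = u] (mod p^(Suc 1))"
      using lift_step[OF p p2 pA pX, of 1 u] c by simp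
    hence "[g 1 = X0] (mod p^1) \<and> [A * (g 1)^2 = u] (mod p^(Suc 1))"
      unfolding gS[of 0] g0 L_def One_nat_def by simp (rule someI_ex, simp)
    then show ?case using c pX g0 by simp
  next
    case (Suc n)
    have ex1: "\<exists>X'. [X' = g n] (mod p^(Suc n)) \<and> [A * X'^2 = u] (mod p^(Suc (Suc n)))"
      using lift_step[OF p p2 pA, of "g n" "Suc n" u] Suc.IH by simp
    have h1: "[g (Suc n) = g n] (mod p^(Suc n)) \<and> [A * (g (Suc n))^2 = u] (mod p^(Suc (Suc n)))"
      unfolding gS[of n] L_def by (rule someI_ex[OF ex1[unfolded L_def]])
    have "[g (Suc n) = g n] (mod p)" using h1 cong_dvd_modulus[of _ _ "p^Suc n" p] by auto
    hence nd: "\<not> p dvd g (Suc n)" using Suc.IH cong_dvd_iff by blast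
    have ex2: "\<exists>X'. [X' = g (Suc n)] (mod p^(Suc (Suc n))) \<and> [A * X'^2 = u] (mod p^(Suc (Suc (Suc n))))"
      using lift_step[OF p p2 pA nd, of "Suc (Suc n)" u] h1 by simp
    have "[g (Suc (Suc n)) = g (Suc n)] (mod p^(Suc (Suc n)))"
      unfolding gS[of "Suc n"] L_def using someI_ex[OF ex2] by simp
    then show ?case using h1 nd by simp
  qed
  define S where "S = (\<lambda>k. g (k - 1))"
  have "padic_int_seq p S" unfolding padic_int_seq_def
  proof
    fix k
    show "[S (Suc k) = S k] (mod p ^ k)"
    proof (cases k)
      case 0 thus ?thesis by simp
    next
      case (Suc j) thus ?thesis unfolding S_def using G[of j] by simp
    qed
  qed
  moreover have "\<not> p dvd S 1" unfolding S_def using g0 pX by simp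
  moreover have "\<forall>k. p^k dvd A * (S k)^2 - u"
  proof
    fix k
    show "p^k dvd A * (S k)^2 - u"
    proof (cases k)
      case 0 thus ?thesis by simp
    next
      case (Suc j) thus ?thesis unfolding S_def using G[of j] by (simp add: cong_iff_dvd_diff)
    qed
  qed
  ultimately show ?thesis unfolding padic_unit_seq_def by blast
qed


lemma const_unit_seq:
  fixes p v :: int
  assumes "\<not> p dvd v"
  shows "padic_unit_seq p (\<lambda>_. v)"
  using assms unfolding padic_unit_seq_def padic_int_seq_def by simp

lemma zp_sol:
  fixes a b c r p :: int
  assumes abc: "a^2 + b^2 = c^2"
    and r4: "\<forall>p. prime p \<and> p dvd r \<longrightarrow> [p = 1] (mod 4)"
    and ra: "gcd r a = 1" and rb: "gcd r b = 1"
    and p: "prime p"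
  shows "Zp_unit_solvable p (\<lambda>x y z. a^2 * x^2 + b^2 * y^2 - c^2 * r^2 * z^2)"
proof (cases "p dvd r")
  case False
  have "\<forall>k. p ^ k dvd a^2 * r^2 + b^2 * r^2 - c^2 * r^2 * 1^2"
  proof
    fix k
    have "a^2 * r^2 + b^2 * r^2 - c^2 * r^2 * 1^2 = r^2 * (a^2 + b^2 - c^2)" by (simp add: algebra_simps)
    also have "... = 0" using abc by simp
    finally show "p ^ k dvd a^2 * r^2 + b^2 * r^2 - c^2 * r^2 * 1^2" by simp
  qed
  moreover have "padic_unit_seq p (\<lambda>_. r)" using False by (rule const_unit_seq)
  moreover have "padic_unit_seq p (\<lambda>_. 1)" using p by (intro const_unit_seq) (simp add: prime_int_iff)
  ultimately show ?thesis unfolding Zp_unit_solvable_def by blast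
next
  case True
  have p4: "[p = 1] (mod 4)" using r4 p True by blast
  have p1: "p > 1" using p by (simp add: prime_gt_1_int)
  have pa: "\<not> p dvd a"
  proof
    assume "p dvd a" hence "p dvd gcd r a" using True by simp
    thus False using ra p1 by (auto dest: zdvd_imp_le)
  qed
  have pb: "\<not> p dvd b"
  proof
    assume "p dvd b" hence "p dvd gcd r b" using True by simp
    thus False using rb p1 by (auto dest: zdvd_imp_le)
  qed
  have p2: "\<not> p dvd 2"
  proof
    assume "p dvd 2" hence "p \<le> 2" by (auto dest: zdvd_imp_le)
    hence "p = 2" using p1 by simp
    thus False using p4 by (simp add: cong_def)
  qed
  obtain j where j: "[j^2 = -1] (mod p)" using sqrt_minus_one[OF p p4] by blast
  have pj1: "p dvd j^2 + 1" using j by (simp add: cong_iff_dvd_diff)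
  have pj: "\<not> p dvd j"
  proof
    assume "p dvd j" hence "p dvd j^2" by (simp add: power2_eq_square)
    hence "p dvd 1" using pj1 by (simp add: dvd_add_right_iff)
    thus False using p1 by (auto dest: zdvd_imp_le)
  qed
  define A where "A = a^2 * b^2"
  define u where "u = c^2 * r^2 - a^2 * b^2"
  have pA: "\<not> p dvd A" unfolding A_def using p pa pb by (simp add: prime_dvd_mult_iff prime_dvd_power_iff)
  have "A * j^2 - u = a^2 * b^2 * (j^2 + 1) - c^2 * r^2" unfolding A_def u_def by (simp add: algebra_simps)
  moreover have "p dvd a^2 * b^2 * (j^2 + 1)" using pj1 by simp
  moreover have "p dvd c^2 * r^2" using True by (simp add: power2_eq_square)
  ultimately have "p dvd A * j^2 - u" by simp
  hence c0: "[A * j^2 = u] (mod p)" by (simp add: cong_iff_dvd_diff)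
  obtain S where S: "padic_unit_seq p S" and Sk: "\<forall>k. p^k dvd A * (S k)^2 - u"
    using hensel_seq[OF p p2 pA pj c0] by blast
  have X: "padic_unit_seq p (\<lambda>k. b * S k)"
    using S pb p unfolding padic_unit_seq_def padic_int_seq_def
    by (auto simp: cong_scalar_left prime_dvd_mult_iff)
  have Y: "padic_unit_seq p (\<lambda>_. a)" using pa by (rule const_unit_seq)
  have Z: "padic_unit_seq p (\<lambda>_. 1)" using p by (intro const_unit_seq) (simp add: prime_int_iff)
  have "\<forall>k. p ^ k dvd a^2 * (b * S k)^2 + b^2 * a^2 - c^2 * r^2 * 1^2"
  proof
    fix k
    have "a^2 * (b * S k)^2 + b^2 * a^2 - c^2 * r^2 * 1^2 = A * (S k)^2 - u"
      unfolding A_def u_def by (simp add: algebra_simps power_mult_distrib)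
    thus "p ^ k dvd a^2 * (b * S k)^2 + b^2 * a^2 - c^2 * r^2 * 1^2" using Sk by simp
  qed
  thus ?thesis unfolding Zp_unit_solvable_def using X Y Z by blast
qed

lemma no_sol:
  fixes a b c x y z r :: int
  assumes a: "a > 0" and b: "b > 0" and c: "c > 0" and abc: "a^2 + b^2 = c^2"
    and r: "r > 1" "\<not> prime r" and rK: "r > 4*a^2*b^2 + 2*c^2"
    and px: "x \<in> primes_or_one" and py: "y \<in> primes_or_one"
    and eq: "a^2 * x^2 + b^2 * y^2 - c^2 * r^2 * z^2 = 0"
  shows False
proof -
  have B: "r * \<bar>z\<bar> \<le> 4*a^2*b^2 + 2*c^2" using bound_rz[OF a b c abc r px py eq] .
  have "z = 0"
  proof (rule ccontr)
    assume "z \<noteq> 0"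
    hence "1 \<le> \<bar>z\<bar>" by simp
    hence "r * 1 \<le> r * \<bar>z\<bar>" using r by (intro mult_left_mono) auto
    thus False using B rK by simp
  qed
  have x: "x > 0" using px unfolding primes_or_one_def by (auto simp: prime_int_iff)
  hence "a^2 * x^2 > 0" using a by simp
  moreover have "b^2 * y^2 \<ge> 0" by simp
  moreover have "a^2 * x^2 + b^2 * y^2 = 0" using eq \<open>z = 0\<close> by simp
  ultimately show False by linarith
qed

theorem theorem6p3:
  fixes a b c :: int
  assumes "a > 0" and "b > 0" and "c > 0"
    and "a\<^sup>2 + b\<^sup>2 = c\<^sup>2"
    and "gcd (gcd a b) c = 1"
    and "even b"
  shows
    "(\<forall>r::int. (r > 1 \<and> \<not> prime r \<and> (\<forall>p. prime p \<and> p dvd r \<longrightarrow> [p = 1] (mod 4))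
                 \<and> gcd r a = 1 \<and> gcd r b = 1) \<longrightarrow>
        (\<exists>x y z :: real. x > 0 \<and> y > 0 \<and> z > 0 \<and>
            (real_of_int a)\<^sup>2 * x\<^sup>2 + (real_of_int b)\<^sup>2 * y\<^sup>2
              - (real_of_int c)\<^sup>2 * (real_of_int r)\<^sup>2 * z\<^sup>2 = 0)
      \<and> (\<forall>p::int. prime p \<longrightarrow>
            Zp_unit_solvable p (\<lambda>x y z. a\<^sup>2 * x\<^sup>2 + b\<^sup>2 * y\<^sup>2 - c\<^sup>2 * r\<^sup>2 * z\<^sup>2)))
   \<and> (\<exists>C::real. \<forall>r::int. (r > 1 \<and> \<not> prime r \<and> (\<forall>p. prime p \<and> p dvd r \<longrightarrow> [p = 1] (mod 4))
                 \<and> gcd r a = 1 \<and> gcd r b = 1) \<longrightarrow>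
        (\<forall>x y z :: int. x \<in> primes_or_one \<and> y \<in> primes_or_one \<and>
            a\<^sup>2 * x\<^sup>2 + b\<^sup>2 * y\<^sup>2 - c\<^sup>2 * r\<^sup>2 * z\<^sup>2 = 0 \<longrightarrow> real_of_int z \<le> C / real_of_int r)
      \<and> (real_of_int r > C \<longrightarrow>
           \<not> (\<exists>x y z :: int. x \<in> primes_or_one \<and> y \<in> primes_or_one \<and>
                 a\<^sup>2 * x\<^sup>2 + b\<^sup>2 * y\<^sup>2 - c\<^sup>2 * r\<^sup>2 * z\<^sup>2 = 0)
         \<and> \<not> (\<exists>x y z :: int. prime x \<and> prime y \<and> prime z \<and>
                 a\<^sup>2 * x\<^sup>2 + b\<^sup>2 * y\<^sup>2 - c\<^sup>2 * r\<^sup>2 * z\<^sup>2 = 0)))"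
proof -
  note a = assms(1) and b = assms(2) and c = assms(3) and abc = assms(4)
  have realeq: "(real_of_int a)^2 + (real_of_int b)^2 = (real_of_int c)^2"
    using arg_cong[OF abc, of real_of_int] by simp
  define K where "K = 4*a^2*b^2 + 2*c^2"
  have part1: "\<forall>r::int. (r > 1 \<and> \<not> prime r \<and> (\<forall>p. prime p \<and> p dvd r \<longrightarrow> [p = 1] (mod 4))
                 \<and> gcd r a = 1 \<and> gcd r b = 1) \<longrightarrow>
        (\<exists>x y z :: real. x > 0 \<and> y > 0 \<and> z > 0 \<and>
            (real_of_int a)\<^sup>2 * x\<^sup>2 + (real_of_int b)\<^sup>2 * y\<^sup>2
              - (real_of_int c)\<^sup>2 * (real_of_int r)\<^sup>2 * z\<^sup>2 = 0)
      \<and> (\<forall>p::int. prime p \<longrightarrow>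
            Zp_unit_solvable p (\<lambda>x y z. a\<^sup>2 * x\<^sup>2 + b\<^sup>2 * y\<^sup>2 - c\<^sup>2 * r\<^sup>2 * z\<^sup>2))"
  proof (intro allI impI conjI)
    fix r :: int
    assume h: "r > 1 \<and> \<not> prime r \<and> (\<forall>p. prime p \<and> p dvd r \<longrightarrow> [p = 1] (mod 4))
                 \<and> gcd r a = 1 \<and> gcd r b = 1"
    have "(real_of_int a)\<^sup>2 * (real_of_int r)\<^sup>2 + (real_of_int b)\<^sup>2 * (real_of_int r)\<^sup>2
              - (real_of_int c)\<^sup>2 * (real_of_int r)\<^sup>2 * 1\<^sup>2
          = (real_of_int r)\<^sup>2 * ((real_of_int a)^2 + (real_of_int b)^2 - (real_of_int c)^2)"
      by (simp add: algebra_simps)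
    also have "... = 0" using realeq by simp
    finally have e: "(real_of_int a)\<^sup>2 * (real_of_int r)\<^sup>2 + (real_of_int b)\<^sup>2 * (real_of_int r)\<^sup>2
              - (real_of_int c)\<^sup>2 * (real_of_int r)\<^sup>2 * 1\<^sup>2 = 0" .
    have "real_of_int r > 0" using h by simp
    thus "\<exists>x y z :: real. x > 0 \<and> y > 0 \<and> z > 0 \<and>
            (real_of_int a)\<^sup>2 * x\<^sup>2 + (real_of_int b)\<^sup>2 * y\<^sup>2
              - (real_of_int c)\<^sup>2 * (real_of_int r)\<^sup>2 * z\<^sup>2 = 0"
      using e by (intro exI[of _ "real_of_int r"] exI[of _ 1]) auto
    fix p :: int
    assume "prime p"
    show "Zp_unit_solvable p (\<lambda>x y z. a\<^sup>2 * x\<^sup>2 + b\<^sup>2 * y\<^sup>2 - c\<^sup>2 * r\<^sup>2 * z\<^sup>2)"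
      by (rule zp_sol[OF abc]) (use h \<open>prime p\<close> in auto)
  qed
  have part2: "\<forall>r::int. (r > 1 \<and> \<not> prime r \<and> (\<forall>p. prime p \<and> p dvd r \<longrightarrow> [p = 1] (mod 4))
                 \<and> gcd r a = 1 \<and> gcd r b = 1) \<longrightarrow>
        (\<forall>x y z :: int. x \<in> primes_or_one \<and> y \<in> primes_or_one \<and>
            a\<^sup>2 * x\<^sup>2 + b\<^sup>2 * y\<^sup>2 - c\<^sup>2 * r\<^sup>2 * z\<^sup>2 = 0 \<longrightarrow> real_of_int z \<le> real_of_int K / real_of_int r)
      \<and> (real_of_int r > real_of_int K \<longrightarrow>
           \<not> (\<exists>x y z :: int. x \<in> primes_or_one \<and> y \<in> primes_or_one \<and>
                 a\<^sup>2 * x\<^sup>2 + b\<^sup>2 * y\<^sup>2 - c\<^sup>2 * r\<^sup>2 * z\<^sup>2 = 0)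
         \<and> \<not> (\<exists>x y z :: int. prime x \<and> prime y \<and> prime z \<and>
                 a\<^sup>2 * x\<^sup>2 + b\<^sup>2 * y\<^sup>2 - c\<^sup>2 * r\<^sup>2 * z\<^sup>2 = 0))"
  proof (intro allI impI conjI)
    fix r :: int
    assume h: "r > 1 \<and> \<not> prime r \<and> (\<forall>p. prime p \<and> p dvd r \<longrightarrow> [p = 1] (mod 4))
                 \<and> gcd r a = 1 \<and> gcd r b = 1"
    hence r: "r > 1" "\<not> prime r" by auto
    {
      fix x y z :: int
      assume q: "x \<in> primes_or_one \<and> y \<in> primes_or_one \<and>
            a\<^sup>2 * x\<^sup>2 + b\<^sup>2 * y\<^sup>2 - c\<^sup>2 * r\<^sup>2 * z\<^sup>2 = 0"
      have B: "r * \<bar>z\<bar> \<le> K" unfolding K_def using bound_rz[OF a b c abc r, of x y z] q by simp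
      have "r * z \<le> r * \<bar>z\<bar>" using r by (intro mult_left_mono) auto
      hence "r * z \<le> K" using B by simp
      hence "real_of_int r * real_of_int z \<le> real_of_int K" by (metis of_int_le_iff of_int_mult)
      moreover have "real_of_int r > 0" using r by simp
      ultimately show "real_of_int z \<le> real_of_int K / real_of_int r"
        by (simp add: pos_le_divide_eq mult.commute)
    }
    assume rK: "real_of_int r > real_of_int K"
    hence rK': "r > 4*a^2*b^2 + 2*c^2" unfolding K_def by linarith
    show "\<not> (\<exists>x y z :: int. x \<in> primes_or_one \<and> y \<in> primes_or_one \<and>
                 a\<^sup>2 * x\<^sup>2 + b\<^sup>2 * y\<^sup>2 - c\<^sup>2 * r\<^sup>2 * z\<^sup>2 = 0)"
    proof
      assume "\<exists>x y z :: int. x \<in> primes_or_one \<and> y \<in> primes_or_one \<and>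
                 a\<^sup>2 * x\<^sup>2 + b\<^sup>2 * y\<^sup>2 - c\<^sup>2 * r\<^sup>2 * z\<^sup>2 = 0"
      then obtain x y z where "x \<in> primes_or_one" "y \<in> primes_or_one"
        "a\<^sup>2 * x\<^sup>2 + b\<^sup>2 * y\<^sup>2 - c\<^sup>2 * r\<^sup>2 * z\<^sup>2 = 0" by blast
      thus False by (rule no_sol[OF a b c abc r rK'])
    qed
    show "\<not> (\<exists>x y z :: int. prime x \<and> prime y \<and> prime z \<and>
                 a\<^sup>2 * x\<^sup>2 + b\<^sup>2 * y\<^sup>2 - c\<^sup>2 * r\<^sup>2 * z\<^sup>2 = 0)"
    proof
      assume "\<exists>x y z :: int. prime x \<and> prime y \<and> prime z \<and>
                 a\<^sup>2 * x\<^sup>2 + b\<^sup>2 * y\<^sup>2 - c\<^sup>2 * r\<^sup>2 * z\<^sup>2 = 0"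
      then obtain x y z where "prime x" "prime y"
        "a\<^sup>2 * x\<^sup>2 + b\<^sup>2 * y\<^sup>2 - c\<^sup>2 * r\<^sup>2 * z\<^sup>2 = 0" by blast
      moreover have "x \<in> primes_or_one" "y \<in> primes_or_one"
        using \<open>prime x\<close> \<open>prime y\<close> unfolding primes_or_one_def by auto
      ultimately show False using no_sol[OF a b c abc r rK'] by blast
    qed
  qed
  show ?thesis
  proof (rule conjI)
    show "\<exists>C::real. \<forall>r::int. (r > 1 \<and> \<not> prime r \<and> (\<forall>p. prime p \<and> p dvd r \<longrightarrow> [p = 1] (mod 4))
                 \<and> gcd r a = 1 \<and> gcd r b = 1) \<longrightarrow>
        (\<forall>x y z :: int. x \<in> primes_or_one \<and> y \<in> primes_or_one \<and>
            a\<^sup>2 * x\<^sup>2 + b\<^sup>2 * y\<^sup>2 - c\<^sup>2 * r\<^sup>2 * z\<^sup>2 = 0 \<longrightarrow> real_of_int z \<le> C / real_of_int r)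
      \<and> (real_of_int r > C \<longrightarrow>
           \<not> (\<exists>x y z :: int. x \<in> primes_or_one \<and> y \<in> primes_or_one \<and>
                 a\<^sup>2 * x\<^sup>2 + b\<^sup>2 * y\<^sup>2 - c\<^sup>2 * r\<^sup>2 * z\<^sup>2 = 0)
         \<and> \<not> (\<exists>x y z :: int. prime x \<and> prime y \<and> prime z \<and>
                 a\<^sup>2 * x\<^sup>2 + b\<^sup>2 * y\<^sup>2 - c\<^sup>2 * r\<^sup>2 * z\<^sup>2 = 0))"
      by (rule exI[of _ "real_of_int K"]) (rule part2)
  qed (rule part1)
qed

end
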